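(* Let $X$ be a random vector in $\mathbb{R}^d$ with $\mathbb{E}\bigl(\lVert X \rVert^2\bigr) < \infty$ and mean $m = \mathbb{E}(X)$, and let $X_1, \dots, X_n$ be $n$ independent copies of $X$. Let $\lambda, \mu, \beta > 0$ and $\delta \in (0,1)$. Define $Y_i = \frac{\psi(\lambda \lVert X_i \rVert)}{\lambda \lVert X_i \rVert} X_i$, where $\psi(t) = \min\{t,1\}$ for $t \geq 0$, and $\widehat{m} = \frac{1}{n}\sum_{i=1}^n Y_i$. Let $a = g_2(2\mu)$ and let $b$ be any real number with $b \geq \exp(2\mu)\, g_1\bigl( 2\mu^2/\beta \bigr)$. Then with probability at least $1 - \delta$, for any $\theta \in \mathbb{S}_d = \{\theta \in \mathbb{R}^d : \lVert \theta \rVert = 1\}$, \begin{multline*} \langle \theta, \widehat{m} - m \rangle \leq \frac{a \mu \lambda}{2} \mathbb{E}\bigl( \langle \theta, X - m \rangle^2 \bigr) + \frac{b \mu \lambda}{2 \beta} \mathbb{E}\bigl( \lVert X - m \rVert^2 \bigr) + \frac{\beta + 2 \log(\delta^{-1})}{2 \mu \lambda n} \\ + \inf_{p \geq 1} \frac{\lambda^p}{p+1}\biggl( \frac{p}{p+1} \biggr)^p \mathbb{E}\bigl( \lVert X \rVert^p \langle \theta, X - m \rangle_- \bigr) \\ + \inf_{p \geq 2} \frac{\lambda^p}{p+1}\biggl( \frac{p}{p+1} \biggr)^p \mathbb{E}\bigl( \lVert X \rVert^p \bigr) \Biggl( \langle \theta, m \rangle_- + \frac{a \mu \lambda}{2}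 \langle \theta, m \rangle^2 \Biggr), \end{multline*} where the infima are over real $p$.
   Context: $\lVert \cdot \rVert$ and $\langle \cdot, \cdot \rangle$ are the Euclidean norm and inner product on $\mathbb{R}^d$. For $r \in \mathbb{R}$, $r_- = \max\{0, -r\}$. The functions $g_1(t) = \frac{1}{t}(\exp(t) - 1)$ and $g_2(t) = \frac{2}{t^2}(\exp(t) - 1 - t)$, $t \in \mathbb{R}$, are extended by continuity at $t = 0$ with $g_1(0) = g_2(0) = 1$. The factor $\frac{\psi(\lambda \lVert x \rVert)}{\lambda \lVert x \rVert}$ is taken to be $1$ when $x = 0$, so that $Y_i$ is the projection of $X_i$ onto the closed ball of radius $1/\lambda$ centred at $0$. *)

theory Defs
  imports "HOL-Probability.Probability"
begin

definition psi :: "real \<Rightarrow> real" where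
  "psi t = min t 1"

definition g1 :: "real \<Rightarrow> real" where
  "g1 t = (if t = 0 then 1 else (exp t - 1) / t)"

definition g2 :: "real \<Rightarrow> real" where
  "g2 t = (if t = 0 then 1 else 2 / t^2 * (exp t - 1 - t))"

text \<open>Thresholded version of a vector: projection onto the closed ball of radius 1/lambda.\<close>
definition thresh :: "real \<Rightarrow> 'd::real_normed_vector \<Rightarrow> 'd" where
  "thresh lam x = (if x = 0 then x else (psi (lam * norm x) / (lam * norm x)) *\<^sub>R x)"

definition neg_part :: "real \<Rightarrow> real" where
  "neg_part r = max 0 (- r)"

end

theory Submission
  imports Defs
begin

lemma amgm_aux:
  fixes s p :: real assumes s0: "0 < s" and s1: "s < 1" and p: "0 < p"
  shows "(1 - s) * s powr p \<le> (p/(p+1)) powr p / (p+1)"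
proof -
  define AA where "AA = s * (p+1) / p"
  define BB where "BB = (p+1)*(1-s)"
  have AA: "AA > 0" using s0 p by (simp add: AA_def)
  have BB: "BB > 0" using s1 p by (simp add: BB_def)
  have "AA powr (p/(p+1)) * BB powr (1/(p+1)) \<le> (p/(p+1))*AA + (1/(p+1))*BB"
    using p AA BB by (intro Youngs_inequality_0) (auto simp: field_simps)
  also have "\<dots> = 1" using p by (simp add: AA_def BB_def divide_simps)
  finally have le1: "AA powr (p/(p+1)) * BB powr (1/(p+1)) \<le> 1" .
  have "(AA powr (p/(p+1)) * BB powr (1/(p+1))) powr (p+1) \<le> 1 powr (p+1)"
    using le1 p AA BB by (intro powr_mono2) auto
  also have "(AA powr (p/(p+1)) * BB powr (1/(p+1))) powr (p+1) = AA powr p * BB"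
    using p AA BB by (simp add: powr_mult powr_powr)
  finally have "AA powr p * BB \<le> 1" by simp
  moreover have "AA powr p = ((p+1)/p) powr p * s powr p"
    using p s0 by (simp add: AA_def powr_mult[symmetric] mult.commute)
  ultimately have "((p+1)/p) powr p * s powr p * ((p+1)*(1-s)) \<le> 1" by (simp add: BB_def)
  hence "(1-s) * s powr p * (((p+1)/p) powr p * (p+1)) \<le> 1" by (simp add: algebra_simps)
  moreover have "((p+1)/p) powr p * (p/(p+1)) powr p = 1"
    using p by (simp add: powr_mult[symmetric])
  moreover have pos: "((p+1)/p) powr p * (p+1) > 0" using p by simp
  ultimately have "(1-s) * s powr p * (((p+1)/p) powr p * (p+1)) * ((p/(p+1)) powr p / (p+1)) \<le> (p/(p+1)) powr p / (p+1)"
    using mult_right_mono[of "(1-s) * s powr p * (((p+1)/p) powr p * (p+1))" 1 "(p/(p+1)) powr p / (p+1)"] p by auto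
  moreover have "(((p+1)/p) powr p * (p+1)) * ((p/(p+1)) powr p / (p+1)) = 1"
    using p \<open>((p+1)/p) powr p * (p/(p+1)) powr p = 1\<close> by (simp add: field_simps)
  ultimately show ?thesis by (metis (no_types, lifting) mult.assoc mult.right_neutral)
qed

definition cf :: "real \<Rightarrow> 'd::real_normed_vector \<Rightarrow> real" where
  "cf lam x = (if lam * norm x \<le> 1 then 1 else 1 / (lam * norm x))"

lemma thresh_cf: "lam > 0 \<Longrightarrow> thresh lam x = cf lam x *\<^sub>R x"
  by (auto simp: thresh_def cf_def psi_def min_def)

lemma cf_bounds: "lam > 0 \<Longrightarrow> 0 < cf lam x \<and> cf lam x \<le> 1"
  by (auto simp: cf_def)

lemma norm_thresh: "lam > 0 \<Longrightarrow> norm (thresh lam x) \<le> 1 / lam"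
proof -
  assume l: "lam > 0"
  show ?thesis
  proof (cases "lam * norm x \<le> 1")
    case True thus ?thesis using l by (simp add: thresh_cf cf_def field_simps)
  next
    case False thus ?thesis using l by (simp add: thresh_cf cf_def field_simps)
  qed
qed

lemma thresh_closest: "lam > 0 \<Longrightarrow> thresh lam x = closest_point (cball 0 (1/lam)) (x::'d::euclidean_space)"
proof -
  assume l: "lam > 0"
  show ?thesis
  proof (rule closest_point_unique)
    show "thresh lam x \<in> cball 0 (1/lam)" using norm_thresh[OF l] by simp
    show "\<forall>z\<in>cball 0 (1 / lam). dist x (thresh lam x) \<le> dist x z"
    proof
      fix z :: 'd assume z: "z \<in> cball 0 (1/lam)"
      show "dist x (thresh lam x) \<le> dist x z"
      proof (cases "lam * norm x \<le> 1")
        case True thus ?thesis using l by (simp add: thresh_cf cf_def)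
      next
        case False
        hence nx: "norm x > 1/lam" using l by (simp add: field_simps)
        have "thresh lam x = (1/(lam * norm x)) *\<^sub>R x" using False l by (simp add: thresh_cf cf_def)
        hence "x - thresh lam x = (1 - 1/(lam * norm x)) *\<^sub>R x" by (simp add: algebra_simps)
        hence "dist x (thresh lam x) = \<bar>1 - 1/(lam * norm x)\<bar> * norm x" by (simp add: dist_norm)
        also have "\<dots> = norm x - 1/lam" using False l nx by (auto simp: field_simps abs_if)
        also have "\<dots> \<le> norm x - norm z" using z by simp
        also have "\<dots> \<le> dist x z" by (simp add: dist_norm norm_triangle_ineq2)
        finally show ?thesis .
      qed
    qed
  qed auto
qed

lemma thresh_lipschitz: "lam > 0 \<Longrightarrow> norm (thresh lam x - thresh lam y) \<le> norm (x - (y::'d::euclidean_space))"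
  using closest_point_lipschitz[of "cball (0::'d) (1/lam)" x y]
  by (simp add: thresh_closest dist_norm)

lemma cf_bound:
  fixes x :: "'d::real_normed_vector"
  assumes l: "lam > 0" and p: "p > 0"
  shows "1 - cf lam x \<le> (lam * norm x) powr p * ((p/(p+1)) powr p / (p+1))"
proof (cases "lam * norm x \<le> 1")
  case True thus ?thesis using l p by (simp add: cf_def)
next
  case False
  define t where "t = lam * norm x"
  have t: "t > 1" using False t_def by simp
  have "(1 - 1/t) * (1/t) powr p \<le> (p/(p+1)) powr p / (p+1)"
    using amgm_aux[of "1/t" p] t p by simp
  hence "(1 - 1/t) * (1/t) powr p * t powr p \<le> (p/(p+1)) powr p / (p+1) * t powr p"
    by (intro mult_right_mono) auto
  moreover have "(1/t) powr p * t powr p = 1" using t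
    by (simp add: powr_divide powr_one_eq_one field_simps) 
  ultimately have "1 - 1/t \<le> (p/(p+1)) powr p / (p+1) * t powr p"
    by (metis mult.assoc mult_1_right)
  thus ?thesis using False by (simp add: cf_def t_def[symmetric] mult.commute)
qed

lemma exp_le_quad_neg: fixes t :: real assumes "t \<le> 0" shows "exp t \<le> 1 + t + t^2/2"
proof -
  have "(\<lambda>x. 1 + x + x^2/2 - exp x) 0 \<le> (\<lambda>x. 1 + x + x^2/2 - exp x) t"
  proof (rule DERIV_nonpos_imp_nonincreasing[OF assms])
    fix x :: real
    show "\<exists>y. ((\<lambda>x. 1 + x + x^2/2 - exp x) has_real_derivative y) (at x) \<and> y \<le> 0"
      by (rule exI[of _ "1 + x - exp x"]) (auto intro!: derivative_eq_intros)
  qed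
  thus ?thesis by simp
qed

lemma exp_tail_sums: "(\<lambda>n. x^(n+2) / fact (n+2)) sums (exp x - 1 - (x::real))"
proof -
  have "(\<lambda>n. x^(n+2) /\<^sub>R fact (n+2)) sums (exp x - (\<Sum>i<2. x^i /\<^sub>R fact i))"
    by (rule sums_split_initial_segment[OF exp_converges])
  thus ?thesis by (simp add: divide_inverse_commute eval_nat_numeral mult.commute diff_diff_eq)
qed

lemma exp_tail_scale:
  fixes s c :: real assumes "0 \<le> s" "s \<le> 1" "0 \<le> c"
  shows "exp (s*c) - 1 - s*c \<le> s^2 * (exp c - 1 - c)"
proof (rule sums_le[OF _ exp_tail_sums sums_mult[OF exp_tail_sums]])
  fix n
  have "(s*c)^(n+2) = s^n * s^2 * c^(n+2)" by (simp add: power_mult_distrib power_add mult_ac power2_eq_square)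
  also have "\<dots> \<le> 1 * s^2 * c^(n+2)"
    using assms by (intro mult_right_mono mult_right_mono power_le_one) (auto simp: power2_eq_square)
  finally show "(s*c)^(n+2) / fact (n+2) \<le> s^2 * (c^(n+2) / fact (n+2))"
    by (simp add: divide_right_mono)
qed

lemma g2_ge1: "c > 0 \<Longrightarrow> g2 c \<ge> 1"
  using exp_lower_Taylor_quadratic[of c] by (simp add: g2_def field_simps)

lemma exp_le_g2:
  fixes u c :: real assumes c: "c > 0" and u: "u \<le> c"
  shows "exp u \<le> 1 + u + g2 c * u^2 / 2"
proof (cases "u \<le> 0")
  case True
  have "exp u \<le> 1 + u + 1 * u^2/2" using exp_le_quad_neg[OF True] by simp
  also have "\<dots> \<le> 1 + u + g2 c * u^2/2"
    using g2_ge1[OF c] by (intro add_left_mono divide_right_mono mult_right_mono) auto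
  finally show ?thesis .
next
  case False
  define s where "s = u / c"
  have s: "0 \<le> s" "s \<le> 1" and us: "u = s * c" using False u c by (auto simp: s_def field_simps)
  have "exp u - 1 - u \<le> s^2 * (exp c - 1 - c)" using exp_tail_scale[OF s] c us by simp
  also have "\<dots> = g2 c * u^2 / 2" using c by (simp add: g2_def us field_simps power2_eq_square)
  finally show ?thesis by simp
qed

lemma g1_bound:
  fixes v d :: real assumes d: "d > 0" and v: "0 \<le> v" "v \<le> d"
  shows "exp v - 1 \<le> v * g1 d"
proof -
  define s where "s = v / d"
  have s: "0 \<le> s" "s \<le> 1" and vs: "v = s * d" using v d by (auto simp: s_def field_simps)
  have "exp ((1 - s) * 0 + s * d) \<le> (1 - s) * exp 0 + s * exp d"
    using convex_onD[OF exp_convex, of s 0 d] s by simp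
  hence "exp v - 1 \<le> s * (exp d - 1)" by (simp add: vs algebra_simps)
  also have "\<dots> = v * g1 d" using d by (simp add: g1_def vs)
  finally show ?thesis .
qed

definition gdens :: "real \<Rightarrow> 'd::euclidean_space \<Rightarrow> 'd \<Rightarrow> real" where
  "gdens bt th x = exp (-(bt/2) * (norm (x - th))^2) / sqrt (2*pi/bt) ^ DIM('d)"

definition gauss :: "real \<Rightarrow> 'd::euclidean_space \<Rightarrow> 'd measure" where
  "gauss bt th = density lborel (\<lambda>x. ennreal (gdens bt th x))"

lemma gdens_nonneg: "bt > 0 \<Longrightarrow> 0 \<le> gdens bt th x"
  by (simp add: gdens_def)

lemma gdens_pos: "bt > 0 \<Longrightarrow> 0 < gdens bt th x"
  by (simp add: gdens_def)

lemma gdens_meas[measurable]: "gdens bt th \<in> borel_measurable borel"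
  unfolding gdens_def by measurable

lemma gk_1d:
  assumes bt: "bt > 0"
  shows "(\<integral>\<^sup>+ t. ennreal (exp (-(bt/2) * t^2)) \<partial>lborel) = ennreal (sqrt (2*pi/bt))"
proof -
  define s where "s = 1 / sqrt bt"
  have s: "s > 0" using bt by (simp add: s_def)
  have eq: "exp (-(bt/2) * t^2) = sqrt (2*pi/bt) * normal_density 0 s t" for t
    using bt by (simp add: normal_density_def s_def real_sqrt_divide power_divide field_simps)
  have "(\<integral>\<^sup>+ t. ennreal (normal_density 0 s t) \<partial>lborel) = 1"
    using nn_integral_eq_integral[OF integrable_normal_density[OF s], of 0] integral_normal_density[OF s]
    by simp
  moreover have "(\<integral>\<^sup>+ t. ennreal (exp (-(bt/2) * t^2)) \<partial>lborel) = (\<integral>\<^sup>+ t. ennreal (sqrt (2*pi/bt)) * ennreal (normal_density 0 s t) \<partial>lborel)"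
    by (intro nn_integral_cong) (subst eq, rule ennreal_mult, auto simp: bt less_imp_le)
  ultimately show ?thesis
    by (simp add: nn_integral_cmult)
qed

lemma gk_int:
  assumes bt: "bt > 0"
  shows "(\<integral>\<^sup>+ x. ennreal (exp (-(bt/2) * (norm (x::'d::euclidean_space))^2)) \<partial>lborel)
       = ennreal (sqrt (2*pi/bt) ^ DIM('d))"
proof -
  have eq: "exp (-(bt/2) * (norm x)^2) = (\<Prod>b\<in>Basis. exp (-(bt/2) * (x \<bullet> b)^2))" for x :: 'd
  proof -
    have "(norm x)^2 = (\<Sum>b\<in>Basis. (x \<bullet> b)^2)"
    proof -
      have "(norm x)^2 = x \<bullet> x" by (rule power2_norm_eq_inner)
      also have "\<dots> = (\<Sum>b\<in>Basis. (x \<bullet> b) * (x \<bullet> b))" by (rule euclidean_inner)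
      finally show ?thesis by (simp add: power2_eq_square)
    qed
    hence "-(bt/2) * (norm x)^2 = (\<Sum>b\<in>Basis. -(bt/2) * (x \<bullet> b)^2)"
      by (simp add: sum_distrib_left)
    thus ?thesis by (simp add: exp_sum)
  qed
  have "(\<integral>\<^sup>+ x. ennreal (exp (-(bt/2) * (norm (x::'d))^2)) \<partial>lborel)
      = (\<integral>\<^sup>+ x. ennreal (\<Prod>b\<in>Basis. exp (-(bt/2) * ((x::'d) \<bullet> b)^2)) \<partial>lborel)"
    by (simp only: eq)
  also have "\<dots> = (\<integral>\<^sup>+ x. (\<Prod>b\<in>Basis. ennreal (exp (-(bt/2) * ((x::'d) \<bullet> b)^2))) \<partial>lborel)"
    by (simp add: prod_ennreal)
  also have "\<dots> = (\<Prod>b\<in>(Basis::'d set). (\<integral>\<^sup>+ t. ennreal (exp (-(bt/2) * t^2)) \<partial>lborel))"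
    by (rule nn_integral_lborel_prod) auto
  also have "\<dots> = (\<Prod>b\<in>(Basis::'d set). ennreal (sqrt (2*pi/bt)))"
    using gk_1d[OF bt] by simp
  also have "\<dots> = ennreal (sqrt (2*pi/bt) ^ DIM('d))"
    by (simp add: ennreal_power bt less_imp_le)
  finally show ?thesis .
qed

lemma nn_integral_lborel_shift:
  fixes f :: "'d::euclidean_space \<Rightarrow> ennreal"
  assumes [measurable]: "f \<in> borel_measurable borel"
  shows "(\<integral>\<^sup>+ x. f x \<partial>lborel) = (\<integral>\<^sup>+ x. f (c + x) \<partial>lborel)"
proof -
  have "(\<integral>\<^sup>+ x. f x \<partial>lborel) = (\<integral>\<^sup>+ x. f x \<partial>distr lborel borel ((+) c))"
    by (simp add: lborel_distr_plus)
  also have "\<dots> = (\<integral>\<^sup>+ x. f (c + x) \<partial>lborel)"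
    by (subst nn_integral_distr) auto
  finally show ?thesis .
qed

lemma gdens_int:
  fixes th :: "'d::euclidean_space"
  assumes bt: "bt > 0"
  shows "(\<integral>\<^sup>+ x. ennreal (gdens bt th x) \<partial>lborel) = 1"
proof -
  have "(\<integral>\<^sup>+ x. ennreal (gdens bt th x) \<partial>lborel) = (\<integral>\<^sup>+ x. ennreal (gdens bt th (th + x)) \<partial>lborel)"
    by (rule nn_integral_lborel_shift) measurable
  also have "\<dots> = (\<integral>\<^sup>+ x. ennreal (exp (-(bt/2) * (norm (x::'d))^2)) * ennreal (1 / sqrt (2*pi/bt) ^ DIM('d)) \<partial>lborel)"
  proof (intro nn_integral_cong)
    fix x :: 'd
    show "ennreal (gdens bt th (th + x)) = ennreal (exp (-(bt/2) * (norm x)^2)) * ennreal (1 / sqrt (2*pi/bt) ^ DIM('d))"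
      by (subst ennreal_mult[symmetric]) (use bt in \<open>auto simp: gdens_def\<close>)
  qed
  also have "\<dots> = ennreal (sqrt (2*pi/bt) ^ DIM('d)) * ennreal (1 / sqrt (2*pi/bt) ^ DIM('d))"
    using gk_int[OF bt, where 'd='d] by (subst nn_integral_multc) auto
  also have "\<dots> = 1" using bt by (simp add: ennreal_mult[symmetric])
  finally show ?thesis .
qed

lemma gauss_prob: "bt > 0 \<Longrightarrow> prob_space (gauss bt th)"
  by (rule prob_spaceI) (simp add: gauss_def emeasure_density gdens_int)

lemma space_gauss[simp]: "space (gauss bt th) = UNIV"
  by (simp add: gauss_def)

lemma sets_gauss[simp, measurable_cong]: "sets (gauss bt th) = sets borel"
  by (simp add: gauss_def)

lemma gdens_mgf_pt:
  assumes bt: "bt > 0"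
  shows "exp (x \<bullet> v) * gdens bt th x = exp (th \<bullet> v + (norm v)^2 / (2*bt)) * gdens bt (th + (1/bt) *\<^sub>R v) x"
proof -
  have "x \<bullet> v + (-(bt/2) * (norm (x - th))^2) = (th \<bullet> v + (norm v)^2 / (2*bt)) + (-(bt/2) * (norm (x - (th + (1/bt) *\<^sub>R v)))^2)"
    using bt by (simp add: power2_norm_eq_inner inner_simps field_simps inner_commute)
  hence "exp (x \<bullet> v) * exp (-(bt/2) * (norm (x - th))^2) = exp (th \<bullet> v + (norm v)^2 / (2*bt)) * exp (-(bt/2) * (norm (x - (th + (1/bt) *\<^sub>R v)))^2)"
    by (simp add: exp_add[symmetric])
  thus ?thesis by (simp add: gdens_def)
qed

lemma gauss_mgf:
  assumes bt: "bt > 0"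
  shows "(\<integral>\<^sup>+ x. ennreal (exp (x \<bullet> v)) \<partial>gauss bt th) = ennreal (exp (th \<bullet> v + (norm v)^2 / (2*bt)))"
proof -
  have "(\<integral>\<^sup>+ x. ennreal (exp (x \<bullet> v)) \<partial>gauss bt th) = (\<integral>\<^sup>+ x. ennreal (exp (x \<bullet> v) * gdens bt th x) \<partial>lborel)"
    unfolding gauss_def using bt
    by (subst nn_integral_density) (auto simp: ennreal_mult[symmetric] gdens_nonneg mult.commute)
  also have "\<dots> = (\<integral>\<^sup>+ x. ennreal (exp (th \<bullet> v + (norm v)^2 / (2*bt))) * ennreal (gdens bt (th + (1/bt) *\<^sub>R v) x) \<partial>lborel)"
    using bt by (intro nn_integral_cong) (simp add: gdens_mgf_pt ennreal_mult gdens_nonneg)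
  also have "\<dots> = ennreal (exp (th \<bullet> v + (norm v)^2 / (2*bt)))"
    by (simp add: nn_integral_cmult gdens_int[OF bt])
  finally show ?thesis .
qed

lemma gauss_integrable_exp:
  assumes bt: "bt > 0"
  shows "integrable (gauss bt th) (\<lambda>x. exp (x \<bullet> v))"
  by (rule integrableI_nonneg) (auto simp: gauss_mgf[OF bt])

lemma gauss_integrable_inner:
  assumes bt: "bt > 0"
  shows "integrable (gauss bt th) (\<lambda>x. x \<bullet> v)"
proof (rule Bochner_Integration.integrable_bound)
  show "integrable (gauss bt th) (\<lambda>x. exp (x \<bullet> v) + exp (x \<bullet> (-v)))"
    by (intro Bochner_Integration.integrable_add gauss_integrable_exp[OF bt])
  show "AE x in gauss bt th. norm (x \<bullet> v) \<le> norm (exp (x \<bullet> v) + exp (x \<bullet> (-v)))"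
  proof (rule AE_I2)
    fix x :: 'a
    have "x \<bullet> v < exp (x \<bullet> v)" "-(x \<bullet> v) < exp (-(x \<bullet> v))"
      using exp_ge_add_one_self[of "x \<bullet> v"] exp_ge_add_one_self[of "-(x \<bullet> v)"] by linarith+
    thus "norm (x \<bullet> v) \<le> norm (exp (x \<bullet> v) + exp (x \<bullet> (-v)))"
      by (simp add: inner_minus_right abs_if) (smt (verit) exp_gt_zero)
  qed
qed measurable

lemma lborel_reflect:
  fixes c :: "'d::euclidean_space"
  shows "distr lborel borel (\<lambda>x. c - x) = lborel"
  using lborel_affine[of "-1" c] by (simp add: density_1)

lemma gauss_mean:
  fixes th :: "'d::euclidean_space"
  assumes bt: "bt > 0"
  shows "(\<integral>x. x \<bullet> v \<partial>gauss bt th) = th \<bullet> v"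
proof -
  let ?g = "gdens bt th"
  have nn: "AE x in lborel. 0 \<le> ?g x" using gdens_nonneg[OF bt] by (intro AE_I2) auto
  have int1: "integrable lborel (\<lambda>x. ?g x *\<^sub>R (x \<bullet> v))"
    using gauss_integrable_inner[OF bt, of th v] unfolding gauss_def
    by (subst (asm) integrable_density) (auto simp: gdens_nonneg[OF bt])
  have int0: "integrable lborel (\<lambda>x. ?g x)"
    by (rule integrableI_nonneg) (auto simp: gdens_int[OF bt] gdens_nonneg[OF bt])
  have I0: "(\<integral>x. ?g x \<partial>lborel) = 1"
    using prob_space.prob_space[OF gauss_prob[OF bt], of th]
    unfolding gauss_def using gdens_nonneg[OF bt]
    by (subst integral_eq_nn_integral) (auto simp: gdens_int[OF bt])
  define I where "I = (\<integral>x. ?g x *\<^sub>R (x \<bullet> v) \<partial>lborel)"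
  have symg: "?g (2 *\<^sub>R th - x) = ?g x" for x
  proof -
    have "norm (2 *\<^sub>R th - x - th) = norm (x - th)"
      by (metis minus_diff_eq norm_minus_cancel scaleR_2 add_diff_cancel_right' diff_diff_eq2 diff_add_eq)
    thus ?thesis by (simp add: gdens_def)
  qed
  have "I = (\<integral>x. ?g x *\<^sub>R (x \<bullet> v) \<partial>distr lborel borel (\<lambda>x. 2 *\<^sub>R th - x))"
    by (simp add: lborel_reflect I_def)
  also have "\<dots> = (\<integral>x. ?g (2 *\<^sub>R th - x) *\<^sub>R ((2 *\<^sub>R th - x) \<bullet> v) \<partial>lborel)"
    by (rule integral_distr) auto
  also have "\<dots> = (\<integral>x. 2 * (th \<bullet> v) * ?g x - ?g x *\<^sub>R (x \<bullet> v) \<partial>lborel)"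
    by (intro Bochner_Integration.integral_cong refl) (simp add: symg inner_simps algebra_simps)
  also have "\<dots> = 2 * (th \<bullet> v) - I"
    using int0 int1 I0 by (simp add: I_def)
  finally have "I = th \<bullet> v" by simp
  moreover have "(\<integral>x. x \<bullet> v \<partial>gauss bt th) = I"
    unfolding gauss_def I_def using gdens_nonneg[OF bt]
    by (subst integral_density) auto
  ultimately show ?thesis by simp
qed

lemma gdens_ratio:
  fixes th :: "'d::euclidean_space"
  shows "gdens bt th x = gdens bt 0 x * exp (bt * (th \<bullet> x) - bt/2 * (norm th)^2)"
proof -
  have "-(bt/2) * (norm (x - th))^2 = -(bt/2) * (norm x)^2 + (bt * (th \<bullet> x) - bt/2 * (norm th)^2)"
    by (simp add: power2_norm_eq_inner inner_simps inner_commute algebra_simps)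
  hence "exp (-(bt/2) * (norm (x - th))^2) = exp (-(bt/2) * (norm x)^2) * exp (bt * (th \<bullet> x) - bt/2 * (norm th)^2)"
    by (simp only: exp_add)
  thus ?thesis by (simp add: gdens_def)
qed

lemma pac_core:
  fixes M :: "'w measure" and X :: "'w \<Rightarrow> 'd::euclidean_space"
    and Xs :: "nat \<Rightarrow> 'w \<Rightarrow> 'd" and n :: nat and f :: "'d \<Rightarrow> 'd"
    and bt delta K :: real
  assumes P: "prob_space M"
    and X_rv[measurable]: "X \<in> borel_measurable M"
    and Xs_rv[measurable]: "\<And>i. i \<in> {1..n} \<Longrightarrow> Xs i \<in> borel_measurable M"
    and Xs_distr: "\<And>i. i \<in> {1..n} \<Longrightarrow> distr M borel (Xs i) = distr M borel X"
    and Xs_indep: "prob_space.indep_vars M (\<lambda>_. borel) Xs {1..n}"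
    and f_meas[measurable]: "f \<in> borel_measurable borel"
    and f_bnd: "\<And>x. norm (f x) \<le> K"
    and bt: "bt > 0" and d0: "0 < delta" and d1: "delta < 1"
  shows "\<exists>A \<in> sets M. measure M A \<ge> 1 - delta \<and>
    (\<forall>\<omega> \<in> A. \<forall>th::'d. norm th = 1 \<longrightarrow>
      (\<Sum>i\<in>{1..n}. th \<bullet> f (Xs i \<omega>)) \<le>
        real n * ((\<integral>\<omega>'. exp (th \<bullet> f (X \<omega>') + (norm (f (X \<omega>')))^2 / (2*bt)) \<partial>M) - 1)
        + bt/2 + ln (1/delta))"
proof -
  interpret prob_space M by (rule P)
  interpret pi: prob_space "gauss bt (0::'d)" by (rule gauss_prob[OF bt])
  have K0: "0 \<le> K" using f_bnd[of 0] norm_ge_zero order_trans by blast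
  define Gn where "Gn th' = (\<integral>\<^sup>+\<omega>. ennreal (exp (th' \<bullet> f (X \<omega>))) \<partial>M)" for th'
  define G where "G th' = enn2real (Gn th')" for th'
  have Gn_meas[measurable]: "Gn \<in> borel_measurable borel"
    unfolding Gn_def by measurable
  have G_meas[measurable]: "G \<in> borel_measurable borel"
    unfolding G_def by measurable
  have Gn_fin: "Gn th' \<le> ennreal (exp (norm th' * K))" for th'
  proof -
    have "Gn th' \<le> (\<integral>\<^sup>+\<omega>. ennreal (exp (norm th' * K)) \<partial>M)"
      unfolding Gn_def
    proof (intro nn_integral_mono ennreal_leI)
      fix \<omega>
      have "th' \<bullet> f (X \<omega>) \<le> norm th' * norm (f (X \<omega>))" by (rule norm_cauchy_schwarz)
      also have "\<dots> \<le> norm th' * K" by (intro mult_left_mono f_bnd) auto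
      finally show "exp (th' \<bullet> f (X \<omega>)) \<le> exp (norm th' * K)" by simp
    qed
    also have "\<dots> = ennreal (exp (norm th' * K))" by (simp add: emeasure_space_1)
    finally show ?thesis .
  qed
  have Gn_eq: "Gn th' = ennreal (G th')" for th'
    using Gn_fin[of th'] by (simp add: G_def top_unique less_top[symmetric]) (metis ennreal_enn2real ennreal_less_top le_less_trans)
  have G_nn: "0 \<le> G th'" for th' by (simp add: G_def)
  define F where "F th' \<omega> = (\<Sum>i\<in>{1..n}. th' \<bullet> f (Xs i \<omega>)) - real n * (G th' - 1)" for th' \<omega>
  have F_meas[measurable]: "(\<lambda>(th', \<omega>). F th' \<omega>) \<in> borel_measurable (gauss bt 0 \<Otimes>\<^sub>M M)"
    unfolding F_def by measurable
  define Z where "Z \<omega> = (\<integral>\<^sup>+th'. ennreal (exp (F th' \<omega>)) \<partial>gauss bt 0)" for \<omega>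
  have Z_meas[measurable]: "Z \<in> borel_measurable M"
    unfolding Z_def by measurable
  have inner_eq: "(\<integral>\<^sup>+\<omega>. ennreal (exp (F th' \<omega>)) \<partial>M) \<le> 1" for th'
  proof -
    have ind: "indep_vars (\<lambda>_. borel) (\<lambda>i \<omega>. ennreal (exp (th' \<bullet> f (Xs i \<omega>)))) {1..n}"
      by (rule indep_vars_compose2[OF Xs_indep]) measurable
    have e1: "exp (F th' \<omega>) = (\<Prod>i\<in>{1..n}. exp (th' \<bullet> f (Xs i \<omega>))) * exp (- (real n * (G th' - 1)))" for \<omega>
      unfolding F_def exp_diff exp_minus divide_inverse by (subst exp_sum) auto
    have "(\<integral>\<^sup>+\<omega>. ennreal (exp (F th' \<omega>)) \<partial>M)
        = (\<integral>\<^sup>+\<omega>. ennreal (\<Prod>i\<in>{1..n}. exp (th' \<bullet> f (Xs i \<omega>))) * ennreal (exp (- (real n * (G th' - 1)))) \<partial>M)"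
      by (intro nn_integral_cong) (simp add: e1 ennreal_mult prod_nonneg)
    also have "\<dots> = (\<integral>\<^sup>+\<omega>. ennreal (\<Prod>i\<in>{1..n}. exp (th' \<bullet> f (Xs i \<omega>))) \<partial>M) * ennreal (exp (- (real n * (G th' - 1))))"
      by (rule nn_integral_multc) measurable
    also have "(\<integral>\<^sup>+\<omega>. ennreal (\<Prod>i\<in>{1..n}. exp (th' \<bullet> f (Xs i \<omega>))) \<partial>M)
        = (\<integral>\<^sup>+\<omega>. (\<Prod>i\<in>{1..n}. ennreal (exp (th' \<bullet> f (Xs i \<omega>)))) \<partial>M)"
      by (simp add: prod_ennreal)
    also have "\<dots> = (\<Prod>i\<in>{1..n}. \<integral>\<^sup>+\<omega>. ennreal (exp (th' \<bullet> f (Xs i \<omega>))) \<partial>M)"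
      by (rule indep_vars_nn_integral[OF _ ind]) auto
    also have "\<dots> = (\<Prod>i\<in>{1..n}. ennreal (G th'))"
    proof (intro prod.cong refl)
      fix i assume i: "i \<in> {1..n}"
      have "(\<integral>\<^sup>+\<omega>. ennreal (exp (th' \<bullet> f (Xs i \<omega>))) \<partial>M) = (\<integral>\<^sup>+x. ennreal (exp (th' \<bullet> f x)) \<partial>distr M borel (Xs i))"
        using i by (subst nn_integral_distr) auto
      also have "\<dots> = (\<integral>\<^sup>+x. ennreal (exp (th' \<bullet> f x)) \<partial>distr M borel X)"
        using Xs_distr[OF i] by simp
      also have "\<dots> = Gn th'"
        unfolding Gn_def by (subst nn_integral_distr) auto
      finally show "(\<integral>\<^sup>+\<omega>. ennreal (exp (th' \<bullet> f (Xs i \<omega>))) \<partial>M) = ennreal (G th')"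
        by (simp add: Gn_eq)
    qed
    also have "\<dots> = ennreal (G th' ^ n)"
      by (simp add: ennreal_power G_nn)
    finally have "(\<integral>\<^sup>+\<omega>. ennreal (exp (F th' \<omega>)) \<partial>M) = ennreal (G th' ^ n * exp (- (real n * (G th' - 1))))"
      by (simp add: ennreal_mult G_nn)
    also have "\<dots> \<le> ennreal 1"
    proof (intro ennreal_leI)
      have "G th' ^ n \<le> exp (G th' - 1) ^ n"
        using exp_ge_add_one_self[of "G th' - 1"] G_nn[of th'] by (intro power_mono) auto
      also have "\<dots> = exp (real n * (G th' - 1))" by (simp add: exp_of_nat_mult[symmetric])
      finally have "G th' ^ n * exp (- (real n * (G th' - 1))) \<le> exp (real n * (G th' - 1)) * exp (- (real n * (G th' - 1)))"
        by (intro mult_right_mono) auto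
      thus "G th' ^ n * exp (- (real n * (G th' - 1))) \<le> 1"
        by (simp add: mult_exp_exp)
    qed
    finally show ?thesis by simp
  qed
  interpret pair_sigma_finite "gauss bt (0::'d)" M ..
  have EZ: "(\<integral>\<^sup>+\<omega>. Z \<omega> \<partial>M) \<le> 1"
  proof -
    have "(\<integral>\<^sup>+\<omega>. Z \<omega> \<partial>M) = (\<integral>\<^sup>+th'. (\<integral>\<^sup>+\<omega>. ennreal (exp (F th' \<omega>)) \<partial>M) \<partial>gauss bt 0)"
      unfolding Z_def by (rule Fubini') measurable
    also have "\<dots> \<le> (\<integral>\<^sup>+th'. 1 \<partial>gauss bt (0::'d))"
      by (intro nn_integral_mono inner_eq)
    also have "\<dots> = 1" using pi.emeasure_space_1 by simp
    finally show ?thesis .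
  qed
  define A where "A = {\<omega>\<in>space M. ennreal delta * Z \<omega> < 1}"
  have A_sets: "A \<in> sets M" unfolding A_def by measurable
  have Bad: "emeasure M {\<omega>\<in>space M. 1 \<le> ennreal delta * Z \<omega>} \<le> ennreal delta"
  proof -
    have "emeasure M {\<omega>\<in>space M. 1 \<le> ennreal delta * Z \<omega>} \<le> ennreal delta * (\<integral>\<^sup>+\<omega>. Z \<omega> * indicator (space M) \<omega> \<partial>M)"
      by (rule nn_integral_Markov_inequality) measurable
    also have "(\<integral>\<^sup>+\<omega>. Z \<omega> * indicator (space M) \<omega> \<partial>M) = (\<integral>\<^sup>+\<omega>. Z \<omega> \<partial>M)"
      by (intro nn_integral_cong) (simp add: indicator_def)
    also have "ennreal delta * \<dots> \<le> ennreal delta * 1"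
      using EZ by (intro mult_left_mono) auto
    finally show ?thesis by simp
  qed
  have A_meas: "measure M A \<ge> 1 - delta"
  proof -
    have eq: "A = space M - {\<omega>\<in>space M. 1 \<le> ennreal delta * Z \<omega>}"
      by (auto simp: A_def not_le)
    have bs: "{\<omega>\<in>space M. 1 \<le> ennreal delta * Z \<omega>} \<in> sets M" by measurable
    have "measure M {\<omega>\<in>space M. 1 \<le> ennreal delta * Z \<omega>} \<le> delta"
      using Bad d0 by (simp add: measure_def enn2real_leI)
    thus ?thesis unfolding eq using prob_compl[OF bs] by simp
  qed
  have main: "(\<Sum>i\<in>{1..n}. th \<bullet> f (Xs i \<omega>)) \<le>
        real n * ((\<integral>\<omega>'. exp (th \<bullet> f (X \<omega>') + (norm (f (X \<omega>')))^2 / (2*bt)) \<partial>M) - 1)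
        + bt/2 + ln (1/delta)" if \<omega>A: "\<omega> \<in> A" and th1: "norm th = 1" for \<omega> th
  proof -
    interpret rho: prob_space "gauss bt th" by (rule gauss_prob[OF bt])
    have thth: "th \<bullet> th = 1" using th1 by (metis power2_norm_eq_inner power_one)
    have \<omega>sp: "\<omega> \<in> space M" and dZ: "ennreal delta * Z \<omega> < 1" using \<omega>A by (auto simp: A_def)
    define v where "v = (\<Sum>i\<in>{1..n}. f (Xs i \<omega>))"
    have Fv: "F x \<omega> = x \<bullet> v - real n * (G x - 1)" for x
      by (simp add: F_def v_def inner_sum_right)
    define phi where "phi x = F x \<omega> - (bt * (th \<bullet> x) - bt/2)" for x
    have phi_meas[measurable]: "phi \<in> borel_measurable borel"
      unfolding phi_def Fv by measurable
    \<comment> \<open>(a) change of measure\<close>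
    have Zeq: "Z \<omega> = (\<integral>\<^sup>+x. ennreal (exp (phi x)) \<partial>gauss bt th)"
    proof -
      have "Z \<omega> = (\<integral>\<^sup>+x. ennreal (gdens bt 0 x) * ennreal (exp (F x \<omega>)) \<partial>lborel)"
        unfolding Z_def gauss_def Fv by (subst nn_integral_density) auto
      also have "\<dots> = (\<integral>\<^sup>+x. ennreal (gdens bt th x) * ennreal (exp (phi x)) \<partial>lborel)"
      proof (intro nn_integral_cong)
        fix x :: 'd
        have "gdens bt th x * exp (phi x) = gdens bt 0 x * (exp (bt * (th \<bullet> x) - bt/2 * (norm th)^2) * exp (phi x))"
          by (subst gdens_ratio) simp
        also have "exp (bt * (th \<bullet> x) - bt/2 * (norm th)^2) * exp (phi x) = exp (F x \<omega>)"
          using th1 by (simp add: phi_def mult_exp_exp)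
        finally show "ennreal (gdens bt 0 x) * ennreal (exp (F x \<omega>)) = ennreal (gdens bt th x) * ennreal (exp (phi x))"
          unfolding ennreal_mult[symmetric, OF gdens_nonneg[OF bt] exp_ge_zero] by simp
      qed
      also have "\<dots> = (\<integral>\<^sup>+x. ennreal (exp (phi x)) \<partial>gauss bt th)"
        unfolding gauss_def by (subst nn_integral_density) auto
      finally show ?thesis .
    qed
    have Zne: "Z \<omega> \<noteq> \<top>"
    proof
      assume "Z \<omega> = \<top>"
      thus False using dZ d0 by (simp add: ennreal_mult_top)
    qed
    hence Zfin: "Z \<omega> < \<infinity>" by (metis less_top infinity_ennreal_def)
    have int_ephi: "integrable (gauss bt th) (\<lambda>x. exp (phi x))"
      by (rule integrableI_nonneg) (use Zfin in \<open>auto simp: Zeq[symmetric]\<close>)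
    have I_ephi: "(\<integral>x. exp (phi x) \<partial>gauss bt th) = enn2real (Z \<omega>)"
      by (subst integral_eq_nn_integral) (auto simp: Zeq)
    define EGr where "EGr = (\<integral>\<omega>'. exp (th \<bullet> f (X \<omega>') + (norm (f (X \<omega>')))^2 / (2*bt)) \<partial>M)"
    have bndE: "exp (th \<bullet> f (X \<omega>') + (norm (f (X \<omega>')))^2 / (2*bt)) \<le> exp (K + K^2/(2*bt))" for \<omega>'
    proof -
      have "th \<bullet> f (X \<omega>') \<le> norm th * norm (f (X \<omega>'))" by (rule norm_cauchy_schwarz)
      also have "\<dots> \<le> K" using th1 f_bnd by simp
      finally have a: "th \<bullet> f (X \<omega>') \<le> K" .
      have "(norm (f (X \<omega>')))^2 \<le> K^2" using f_bnd by (intro power_mono) auto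
      hence "(norm (f (X \<omega>')))^2 / (2*bt) \<le> K^2/(2*bt)" using bt by (intro divide_right_mono) auto
      with a show ?thesis by simp
    qed
    have int_E: "integrable M (\<lambda>\<omega>'. exp (th \<bullet> f (X \<omega>') + (norm (f (X \<omega>')))^2 / (2*bt)))"
      by (rule integrable_const_bound[where B="exp (K + K^2/(2*bt))"]) (use bndE in \<open>auto intro!: AE_I2\<close>)
    have nnG: "(\<integral>\<^sup>+x. ennreal (G x) \<partial>gauss bt th) = ennreal EGr"
    proof -
      have "(\<integral>\<^sup>+x. ennreal (G x) \<partial>gauss bt th) = (\<integral>\<^sup>+x. (\<integral>\<^sup>+\<omega>'. ennreal (exp (x \<bullet> f (X \<omega>'))) \<partial>M) \<partial>gauss bt th)"
        by (simp add: Gn_eq[symmetric] Gn_def)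
      also have "\<dots> = (\<integral>\<^sup>+\<omega>'. (\<integral>\<^sup>+x. ennreal (exp (x \<bullet> f (X \<omega>'))) \<partial>gauss bt th) \<partial>M)"
        by (rule pair_sigma_finite.Fubini'[symmetric]) (unfold_locales, measurable)
      also have "\<dots> = (\<integral>\<^sup>+\<omega>'. ennreal (exp (th \<bullet> f (X \<omega>') + (norm (f (X \<omega>')))^2 / (2*bt))) \<partial>M)"
        by (simp add: gauss_mgf[OF bt])
      also have "\<dots> = ennreal EGr"
        unfolding EGr_def by (rule nn_integral_eq_integral[OF int_E]) auto
      finally show ?thesis .
    qed
    have int_G: "integrable (gauss bt th) G"
      by (rule integrableI_nonneg) (auto simp: nnG G_nn)
    have I_G: "(\<integral>x. G x \<partial>gauss bt th) = EGr"
    proof -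
      have "EGr \<ge> 0" unfolding EGr_def by simp
      thus ?thesis by (subst integral_eq_nn_integral) (auto simp: nnG G_nn)
    qed
    have phi_eq: "phi x = ((x \<bullet> v - real n * G x) - bt * (x \<bullet> th)) + (real n + bt/2)" for x
      by (simp add: phi_def Fv inner_commute algebra_simps)
    have i1: "integrable (gauss bt th) (\<lambda>x. x \<bullet> v)" by (rule gauss_integrable_inner[OF bt])
    have i2: "integrable (gauss bt th) (\<lambda>x. real n * G x)" by (intro integrable_mult_right int_G)
    have i3: "integrable (gauss bt th) (\<lambda>x. bt * (x \<bullet> th))" by (intro integrable_mult_right gauss_integrable_inner[OF bt])
    have i12: "integrable (gauss bt th) (\<lambda>x. x \<bullet> v - real n * G x)" by (intro Bochner_Integration.integrable_diff i1 i2)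
    have i123: "integrable (gauss bt th) (\<lambda>x. (x \<bullet> v - real n * G x) - bt * (x \<bullet> th))" by (intro Bochner_Integration.integrable_diff i12 i3)
    have int_phi: "integrable (gauss bt th) phi"
      unfolding phi_eq[abs_def] by (intro Bochner_Integration.integrable_add i123 rho.integrable_const)
    have "(\<integral>x. phi x \<partial>gauss bt th) = (\<integral>x. (x \<bullet> v - real n * G x) - bt * (x \<bullet> th) \<partial>gauss bt th) + (real n + bt/2)"
      unfolding phi_eq[abs_def] by (subst Bochner_Integration.integral_add[OF i123 rho.integrable_const]) (use rho.prob_space in simp)
    also have "(\<integral>x. (x \<bullet> v - real n * G x) - bt * (x \<bullet> th) \<partial>gauss bt th) = (\<integral>x. x \<bullet> v - real n * G x \<partial>gauss bt th) - (\<integral>x. bt * (x \<bullet> th) \<partial>gauss bt th)"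
      by (rule Bochner_Integration.integral_diff[OF i12 i3])
    also have "(\<integral>x. x \<bullet> v - real n * G x \<partial>gauss bt th) = (\<integral>x. x \<bullet> v \<partial>gauss bt th) - (\<integral>x. real n * G x \<partial>gauss bt th)"
      by (rule Bochner_Integration.integral_diff[OF i1 i2])
    finally have I_phi: "(\<integral>x. phi x \<partial>gauss bt th) = th \<bullet> v - real n * EGr + real n - bt + bt/2"
      using gauss_mean[OF bt, of th] I_G thth by simp
    have J: "exp (\<integral>x. phi x \<partial>gauss bt th) \<le> (\<integral>x. exp (phi x) \<partial>gauss bt th)"
      by (rule rho.jensens_inequality[where I=UNIV]) (auto intro: int_phi int_ephi exp_convex)
    have zlt: "enn2real (Z \<omega>) < 1 / delta"
    proof -
      obtain z where z: "Z \<omega> = ennreal z" "0 \<le> z" using Zfin by (cases "Z \<omega>") auto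
      have "ennreal (delta * z) < 1" using dZ z d0 by (simp add: ennreal_mult)
      hence "delta * z < 1" by (simp only: ennreal_less_one_iff)
      thus ?thesis using z d0 by (simp add: field_simps)
    qed
    have "exp (\<integral>x. phi x \<partial>gauss bt th) < exp (ln (1/delta))"
      using J I_ephi zlt d0 by simp
    hence "(\<integral>x. phi x \<partial>gauss bt th) < ln (1/delta)" by simp
    hence "th \<bullet> v < real n * (EGr - 1) + bt/2 + ln (1/delta)"
      unfolding I_phi by (simp add: algebra_simps)
    moreover have "(\<Sum>i\<in>{1..n}. th \<bullet> f (Xs i \<omega>)) = th \<bullet> v"
      by (simp add: v_def inner_sum_right)
    ultimately show ?thesis unfolding EGr_def by simp
  qed
  show ?thesis using A_sets A_meas main by blast
qed

lemma var_min:
  fixes M :: "'w measure" and Y :: "'w \<Rightarrow> 'd::euclidean_space"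
  assumes P: "prob_space M" and Ym[measurable]: "Y \<in> borel_measurable M"
    and Yb: "\<And>\<omega>. norm (Y \<omega>) \<le> B"
  shows "(\<integral>\<omega>. (norm (Y \<omega> - integral\<^sup>L M Y))^2 \<partial>M) \<le> (\<integral>\<omega>. (norm (Y \<omega> - c))^2 \<partial>M)"
proof -
  interpret prob_space M by (rule P)
  define EY where "EY = integral\<^sup>L M Y"
  have iY: "integrable M Y" by (rule integrable_const_bound[where B=B]) (auto simp: Yb)
  have i1: "integrable M (\<lambda>\<omega>. Y \<omega> - EY)" using iY by simp
  have b1: "(norm (Y \<omega> - EY))^2 \<le> (B + norm EY)^2" for \<omega>
    by (intro power_mono order_trans[OF norm_triangle_ineq4]) (auto simp: Yb)
  have b2: "(norm (Y \<omega> - c))^2 \<le> (B + norm c)^2" for \<omega>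
    by (intro power_mono order_trans[OF norm_triangle_ineq4]) (auto simp: Yb)
  have iA: "integrable M (\<lambda>\<omega>. (norm (Y \<omega> - EY))^2)"
    by (rule integrable_const_bound[where B="(B + norm EY)^2"]) (auto simp: b1)
  have iC: "integrable M (\<lambda>\<omega>. 2 * ((Y \<omega> - EY) \<bullet> (EY - c)))"
    using i1 by (intro integrable_mult_right) (rule integrable_inner_left)
  have pt: "(norm (Y \<omega> - c))^2 = (norm (Y \<omega> - EY))^2 + 2 * ((Y \<omega> - EY) \<bullet> (EY - c)) + (norm (EY - c))^2" for \<omega>
  proof -
    have "Y \<omega> - c = (Y \<omega> - EY) + (EY - c)" by simp
    hence "(norm (Y \<omega> - c))^2 = (norm ((Y \<omega> - EY) + (EY - c)))^2" by metis
    also have "\<dots> = (norm (Y \<omega> - EY))^2 + 2 * ((Y \<omega> - EY) \<bullet> (EY - c)) + (norm (EY - c))^2"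
      using dot_norm[of "Y \<omega> - EY" "EY - c"] by simp
    finally show ?thesis .
  qed
  have iB: "integrable M (\<lambda>\<omega>. (norm (Y \<omega> - c))^2)"
    by (rule integrable_const_bound[where B="(B + norm c)^2"]) (auto simp: b2)
  have "(\<integral>\<omega>. (norm (Y \<omega> - c))^2 \<partial>M) = (\<integral>\<omega>. (norm (Y \<omega> - EY))^2 + 2 * ((Y \<omega> - EY) \<bullet> (EY - c)) + (norm (EY - c))^2 \<partial>M)"
    by (simp only: pt)
  also have "\<dots> = (\<integral>\<omega>. (norm (Y \<omega> - EY))^2 \<partial>M) + (\<integral>\<omega>. 2 * ((Y \<omega> - EY) \<bullet> (EY - c)) \<partial>M) + (norm (EY - c))^2"
    using iA iC by (simp add: prob_space)
  also have "(\<integral>\<omega>. 2 * ((Y \<omega> - EY) \<bullet> (EY - c)) \<partial>M) = 0"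
    using i1 iY by (simp add: EY_def prob_space)
  finally show ?thesis unfolding EY_def by simp
qed
lemma sq_conv:
  fixes c u w :: real assumes "0 \<le> c" "c \<le> 1"
  shows "(c*u - (1-c)*w)^2 \<le> u^2 + (1-c)*w^2"
proof -
  have "c*u^2 + (1-c)*w^2 - (c*u - (1-c)*w)^2 = c*(1-c)*(u+w)^2"
    by (simp add: power2_eq_square algebra_simps)
  moreover have "c*(1-c)*(u+w)^2 \<ge> 0" using assms by simp
  moreover have "c*u^2 \<le> u^2" using assms by (simp add: mult_left_le_one_le)
  ultimately show ?thesis by linarith
qed

lemma expUV:
  fixes U V mu bt a b :: real
  assumes mu: "mu > 0" and bt: "bt > 0" and U: "U \<le> 2*mu"
    and V: "0 \<le> V" "V \<le> 2*mu^2/bt"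
    and a: "a = g2 (2*mu)" and b: "b \<ge> exp (2*mu) * g1 (2*mu^2/bt)"
  shows "exp (U + V) \<le> 1 + U + a*U^2/2 + b*V"
proof -
  have d: "2*mu^2/bt > 0" using mu bt by simp
  have e1: "exp U \<le> 1 + U + a*U^2/2" using exp_le_g2[of "2*mu" U] mu U a by simp
  have e2: "exp V - 1 \<le> V * g1 (2*mu^2/bt)" by (rule g1_bound[OF d V])
  have e3: "exp U \<le> exp (2*mu)" using U by simp
  have "exp U * (exp V - 1) \<le> exp (2*mu) * (V * g1 (2*mu^2/bt))"
    using e2 e3 V by (intro mult_mono) auto
  also have "\<dots> = V * (exp (2*mu) * g1 (2*mu^2/bt))" by simp
  also have "\<dots> \<le> V * b" using b V by (intro mult_left_mono) auto
  finally have "exp U * (exp V - 1) \<le> b * V" by (simp add: mult.commute)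
  moreover have "exp (U + V) = exp U + exp U * (exp V - 1)" by (simp add: exp_add algebra_simps)
  ultimately show ?thesis using e1 by linarith
qed

lemma ereal_int_le_coef:
  fixes g h :: "'w \<Rightarrow> real"
  assumes ig: "integrable M g" and g0: "\<And>\<omega>. \<omega> \<in> space M \<Longrightarrow> 0 \<le> g \<omega>"
    and gh: "\<And>\<omega>. \<omega> \<in> space M \<Longrightarrow> g \<omega> \<le> c * h \<omega>" and c0: "0 \<le> c"
    and hm[measurable]: "h \<in> borel_measurable M" and h0: "\<And>\<omega>. \<omega> \<in> space M \<Longrightarrow> 0 \<le> h \<omega>"
  shows "ereal (integral\<^sup>L M g) \<le> ereal c * enn2ereal (\<integral>\<^sup>+ \<omega>. ennreal (h \<omega>) \<partial>M)"
proof -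
  have gm[measurable]: "g \<in> borel_measurable M" using ig by auto
  have "ennreal (integral\<^sup>L M g) = (\<integral>\<^sup>+ \<omega>. ennreal (g \<omega>) \<partial>M)"
    using g0 by (intro nn_integral_eq_integral[symmetric] ig) (auto intro: AE_I2)
  also have "\<dots> \<le> (\<integral>\<^sup>+ \<omega>. ennreal c * ennreal (h \<omega>) \<partial>M)"
    using gh c0 h0 by (intro nn_integral_mono) (simp add: ennreal_mult[symmetric])
  also have "\<dots> = ennreal c * (\<integral>\<^sup>+ \<omega>. ennreal (h \<omega>) \<partial>M)"
    by (rule nn_integral_cmult) measurable
  finally have le: "ennreal (integral\<^sup>L M g) \<le> ennreal c * (\<integral>\<^sup>+ \<omega>. ennreal (h \<omega>) \<partial>M)" .
  have ge: "integral\<^sup>L M g \<ge> 0" using g0 by (intro integral_nonneg_AE) (auto intro: AE_I2)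
  have "ereal (integral\<^sup>L M g) = enn2ereal (ennreal (integral\<^sup>L M g))" using ge by (simp add: enn2ereal_ennreal)
  also have "\<dots> \<le> enn2ereal (ennreal c * (\<integral>\<^sup>+ \<omega>. ennreal (h \<omega>) \<partial>M))"
    using le by (simp add: less_eq_ennreal.rep_eq)
  also have "\<dots> = ereal c * enn2ereal (\<integral>\<^sup>+ \<omega>. ennreal (h \<omega>) \<partial>M)"
    using c0 by (simp add: times_ennreal.rep_eq enn2ereal_ennreal)
  finally show ?thesis .
qed

lemma coef_bound:
  fixes x :: "'d::real_normed_vector"
  assumes lam: "lam > 0" and p: "p > 0"
  shows "1 - cf lam x \<le> (lam powr p / (p + 1) * (p / (p + 1)) powr p) * norm x powr p"
proof -
  have "1 - cf lam x \<le> (lam * norm x) powr p * ((p/(p+1)) powr p / (p+1))" by (rule cf_bound[OF lam p])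
  also have "(lam * norm x) powr p = lam powr p * norm x powr p" using lam by (simp add: powr_mult)
  finally show ?thesis by (simp add: field_simps)
qed

theorem mainTheorem3:
  fixes M :: "'w measure" and X :: "'w \<Rightarrow> 'd::euclidean_space"
    and Xs :: "nat \<Rightarrow> 'w \<Rightarrow> 'd" and n :: nat
    and lam mu beta delta a b :: real
  assumes "prob_space M"
    and X_rv: "X \<in> borel_measurable M"
    and X_L2: "integrable M (\<lambda>\<omega>. (norm (X \<omega>))\<^sup>2)"
    and n_pos: "n \<ge> 1"
    and Xs_rv: "\<And>i. i \<in> {1..n} \<Longrightarrow> Xs i \<in> borel_measurable M"
    and Xs_distr: "\<And>i. i \<in> {1..n} \<Longrightarrow> distr M borel (Xs i) = distr M borel X"
    and Xs_indep: "prob_space.indep_vars M (\<lambda>_. borel) Xs {1..n}"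
    and "lam > 0" and "mu > 0" and "beta > 0"
    and "0 < delta" and "delta < 1"
    and a_def: "a = g2 (2 * mu)"
    and b_ge: "b \<ge> exp (2 * mu) * g1 (2 * mu\<^sup>2 / beta)"
  shows "\<exists>A \<in> sets M. measure M A \<ge> 1 - delta \<and>
    (\<forall>\<omega> \<in> A. \<forall>\<theta>::'d. norm \<theta> = 1 \<longrightarrow>
      (let m = integral\<^sup>L M X;
           mhat = (1 / real n) *\<^sub>R (\<Sum>i\<in>{1..n}. thresh lam (Xs i \<omega>))
       in ereal (\<theta> \<bullet> (mhat - m)) \<le>
          ereal (a * mu * lam / 2 * integral\<^sup>L M (\<lambda>\<omega>'. (\<theta> \<bullet> (X \<omega>' - m))\<^sup>2)
                 + b * mu * lam / (2 * beta) * integral\<^sup>L M (\<lambda>\<omega>'. (norm (X \<omega>' - m))\<^sup>2)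
                 + (beta + 2 * ln (1 / delta)) / (2 * mu * lam * real n))
          + (INF p\<in>{1::real..}. ereal (lam powr p / (p + 1) * (p / (p + 1)) powr p)
               * enn2ereal (\<integral>\<^sup>+ \<omega>'. ennreal (norm (X \<omega>') powr p
                                     * neg_part (\<theta> \<bullet> (X \<omega>' - m))) \<partial>M))
          + (INF p\<in>{2::real..}. ereal (lam powr p / (p + 1) * (p / (p + 1)) powr p)
               * enn2ereal (\<integral>\<^sup>+ \<omega>'. ennreal (norm (X \<omega>') powr p) \<partial>M)
               * ereal (neg_part (\<theta> \<bullet> m) + a * mu * lam / 2 * (\<theta> \<bullet> m)\<^sup>2))))"
proof -
  note P = assms(1)
  note X_rv[measurable] Xs_rv[measurable]
  interpret prob_space M by (rule P)
  have lam: "lam > 0" and mu: "mu > 0" and bt: "beta > 0" and d0: "0 < delta" and d1: "delta < 1"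
    using assms by auto
  define m where "m = integral\<^sup>L M X"
  define Y where "Y \<omega> = thresh lam (X \<omega>)" for \<omega>
  define Ybar where "Ybar = integral\<^sup>L M Y"
  define cX where "cX \<omega> = cf lam (X \<omega>)" for \<omega>
  have cf_meas[measurable]: "cf lam \<in> borel_measurable (borel :: 'd measure)"
    unfolding cf_def[abs_def] by measurable
  have thresh_meas[measurable]: "thresh lam \<in> borel_measurable (borel :: 'd measure)"
  proof -
    have "thresh lam = (\<lambda>x::'d. cf lam x *\<^sub>R x)" using lam by (simp add: fun_eq_iff thresh_cf)
    thus ?thesis by simp
  qed
  have negp_meas[measurable]: "neg_part \<in> borel_measurable borel"
    unfolding neg_part_def[abs_def] by measurable
  have Y_meas[measurable]: "Y \<in> borel_measurable M" unfolding Y_def[abs_def] by measurable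
  have cX_meas[measurable]: "cX \<in> borel_measurable M" unfolding cX_def[abs_def] by measurable
  have Yb: "norm (Y \<omega>) \<le> 1/lam" for \<omega> unfolding Y_def by (rule norm_thresh[OF lam])
  have iY: "integrable M Y" by (rule integrable_const_bound[where B="1/lam"]) (auto simp: Yb)
  have Ybar_b: "norm Ybar \<le> 1/lam"
  proof -
    have "norm Ybar \<le> (\<integral>\<omega>. norm (Y \<omega>) \<partial>M)" unfolding Ybar_def by (rule integral_norm_bound)
    also have "\<dots> \<le> (\<integral>\<omega>. 1/lam \<partial>M)"
      using iY Yb by (intro integral_mono) auto
    also have "\<dots> = 1/lam" by (simp add: prob_space)
    finally show ?thesis .
  qed
  have iX: "integrable M X"
  proof (rule Bochner_Integration.integrable_bound)
    show "integrable M (\<lambda>\<omega>. 1 + (norm (X \<omega>))^2)" using X_L2 by simp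
    show "AE \<omega> in M. norm (X \<omega>) \<le> norm (1 + (norm (X \<omega>))^2)"
    proof (rule AE_I2)
      fix \<omega>
      have "norm (X \<omega>) \<le> 1 + (norm (X \<omega>))^2"
      proof -
        have "0 \<le> (norm (X \<omega>) - 1)^2" by simp
        moreover have "(norm (X \<omega>) - 1)^2 = (norm (X \<omega>))^2 - 2 * norm (X \<omega>) + 1"
          by (simp add: power2_eq_square algebra_simps)
        ultimately show ?thesis using norm_ge_zero[of "X \<omega>"] by linarith
      qed
      thus "norm (X \<omega>) \<le> norm (1 + (norm (X \<omega>))^2)" by simp
    qed
  qed (rule X_rv)
  define f where "f x = (mu * lam) *\<^sub>R (thresh lam x - Ybar)" for x :: 'd
  have f_meas[measurable]: "f \<in> borel_measurable borel" unfolding f_def[abs_def] by measurable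
  have f_bnd: "norm (f x) \<le> 2 * mu" for x
  proof -
    have "norm (thresh lam x - Ybar) \<le> norm (thresh lam x) + norm Ybar" by (rule norm_triangle_ineq4)
    also have "\<dots> \<le> 1/lam + 1/lam" using norm_thresh[OF lam, of x] Ybar_b by simp
    finally have "mu * lam * norm (thresh lam x - Ybar) \<le> mu * lam * (2/lam)"
      using mu lam by (intro mult_left_mono) auto
    thus ?thesis using mu lam by (simp add: f_def)
  qed
  obtain A where A_sets: "A \<in> sets M" and A_meas: "measure M A \<ge> 1 - delta"
    and A_prop: "\<And>\<omega> th. \<omega> \<in> A \<Longrightarrow> norm th = 1 \<Longrightarrow>
      (\<Sum>i\<in>{1..n}. th \<bullet> f (Xs i \<omega>)) \<le>
        real n * ((\<integral>\<omega>'. exp (th \<bullet> f (X \<omega>') + (norm (f (X \<omega>')))^2 / (2*beta)) \<partial>M) - 1)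
        + beta/2 + ln (1/delta)"
    using pac_core[OF P X_rv Xs_rv Xs_distr Xs_indep f_meas f_bnd bt d0 d1] by blast
  have a1: "a \<ge> 1" using g2_ge1[of "2*mu"] mu a_def by simp
  have b0: "b \<ge> 0"
  proof -
    have "g1 (2 * mu^2 / beta) \<ge> 0" using mu bt by (simp add: g1_def)
    thus ?thesis using b_ge by (smt (verit) exp_gt_zero mult_nonneg_nonneg)
  qed
  have YYb: "norm (Y \<omega> - Ybar) \<le> 2/lam" for \<omega>
    using order_trans[OF norm_triangle_ineq4, of "Y \<omega>" Ybar] Yb[of \<omega>] Ybar_b by simp
  have fY: "f (X \<omega>) = (mu * lam) *\<^sub>R (Y \<omega> - Ybar)" for \<omega> by (simp add: f_def Y_def)
  have EG: "(\<integral>\<omega>'. exp (th \<bullet> f (X \<omega>') + (norm (f (X \<omega>')))^2 / (2*beta)) \<partial>M)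
      \<le> 1 + a * (mu*lam)^2 / 2 * (\<integral>\<omega>'. (th \<bullet> (Y \<omega>' - Ybar))^2 \<partial>M)
          + b * (mu*lam)^2 / (2*beta) * (\<integral>\<omega>'. (norm (Y \<omega>' - Ybar))^2 \<partial>M)"
    if th1: "norm th = 1" for th
  proof -
    define U where "U \<omega>' = th \<bullet> (Y \<omega>' - Ybar)" for \<omega>'
    define W where "W \<omega>' = (norm (Y \<omega>' - Ybar))^2" for \<omega>'
    have Ub: "\<bar>U \<omega>'\<bar> \<le> 2/lam" for \<omega>'
      using Cauchy_Schwarz_ineq2[of th "Y \<omega>' - Ybar"] th1 YYb[of \<omega>'] by (simp add: U_def)
    have Wb: "0 \<le> W \<omega>' \<and> W \<omega>' \<le> (2/lam)^2" for \<omega>'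
      using YYb[of \<omega>'] by (simp add: W_def power_mono)
    have U_meas[measurable]: "U \<in> borel_measurable M" unfolding U_def[abs_def] by measurable
    have W_meas[measurable]: "W \<in> borel_measurable M" unfolding W_def[abs_def] by measurable
    have iU: "integrable M U" by (rule integrable_const_bound[where B="2/lam"]) (use Ub lam in auto)
    have U2b: "(U \<omega>')^2 \<le> (2/lam)^2" for \<omega>'
    proof -
      have "\<bar>U \<omega>'\<bar>^2 \<le> (2/lam)^2" by (rule power_mono[OF Ub]) simp
      thus ?thesis by simp
    qed
    have iU2: "integrable M (\<lambda>\<omega>'. (U \<omega>')^2)"
      by (rule integrable_const_bound[where B="(2/lam)^2"]) (use U2b in auto)
    have iW: "integrable M W" by (rule integrable_const_bound[where B="(2/lam)^2"]) (auto simp: Wb abs_of_nonneg)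
    have pt: "exp (th \<bullet> f (X \<omega>') + (norm (f (X \<omega>')))^2 / (2*beta))
        \<le> 1 + (mu*lam) * U \<omega>' + a * ((mu*lam)^2 / 2 * (U \<omega>')^2) + b * ((mu*lam)^2 / (2*beta) * W \<omega>')" for \<omega>'
    proof -
      have e1: "th \<bullet> f (X \<omega>') = (mu*lam) * U \<omega>'" by (simp add: fY U_def)
      have e2: "(norm (f (X \<omega>')))^2 / (2*beta) = (mu*lam)^2 / (2*beta) * W \<omega>'"
        using mu lam by (simp add: fY W_def power_mult_distrib abs_of_pos)
      have "(mu*lam) * U \<omega>' \<le> (mu*lam) * (2/lam)" using Ub[of \<omega>'] mu lam by (intro mult_left_mono) auto
      hence u: "(mu*lam) * U \<omega>' \<le> 2*mu" using lam by simp
      have "(mu*lam)^2 / (2*beta) * W \<omega>' \<le> (mu*lam)^2 / (2*beta) * (2/lam)^2"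
        using Wb[of \<omega>'] bt by (intro mult_left_mono) auto
      hence v: "(mu*lam)^2 / (2*beta) * W \<omega>' \<le> 2*mu^2/beta" using lam bt by (simp add: power2_eq_square field_simps)
      have v0: "0 \<le> (mu*lam)^2 / (2*beta) * W \<omega>'" using Wb[of \<omega>'] bt by simp
      have "exp ((mu*lam) * U \<omega>' + (mu*lam)^2 / (2*beta) * W \<omega>')
          \<le> 1 + (mu*lam) * U \<omega>' + a * ((mu*lam) * U \<omega>')^2 / 2 + b * ((mu*lam)^2 / (2*beta) * W \<omega>')"
        by (rule expUV[OF mu bt u v0 v a_def b_ge])
      thus ?thesis by (simp add: e1 e2 power_mult_distrib)
    qed
    have "(\<integral>\<omega>'. exp (th \<bullet> f (X \<omega>') + (norm (f (X \<omega>')))^2 / (2*beta)) \<partial>M)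
        \<le> (\<integral>\<omega>'. 1 + (mu*lam) * U \<omega>' + a * ((mu*lam)^2 / 2 * (U \<omega>')^2) + b * ((mu*lam)^2 / (2*beta) * W \<omega>') \<partial>M)"
    proof (rule integral_mono)
      show "integrable M (\<lambda>\<omega>'. exp (th \<bullet> f (X \<omega>') + (norm (f (X \<omega>')))^2 / (2*beta)))"
      proof (rule integrable_const_bound[where B="exp (2*mu + (2*mu)^2/(2*beta))"])
        show "AE \<omega>' in M. norm (exp (th \<bullet> f (X \<omega>') + (norm (f (X \<omega>')))^2 / (2*beta))) \<le> exp (2*mu + (2*mu)^2/(2*beta))"
        proof (rule AE_I2)
          fix \<omega>'
          have "th \<bullet> f (X \<omega>') \<le> 2*mu"
            using Cauchy_Schwarz_ineq2[of th "f (X \<omega>')"] th1 f_bnd[of "X \<omega>'"] by simp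
          moreover have "(norm (f (X \<omega>')))^2 / (2*beta) \<le> (2*mu)^2/(2*beta)"
            using f_bnd[of "X \<omega>'"] bt by (intro divide_right_mono power_mono) auto
          ultimately show "norm (exp (th \<bullet> f (X \<omega>') + (norm (f (X \<omega>')))^2 / (2*beta))) \<le> exp (2*mu + (2*mu)^2/(2*beta))"
            by simp
        qed
      qed measurable
      show "integrable M (\<lambda>\<omega>'. 1 + (mu*lam) * U \<omega>' + a * ((mu*lam)^2 / 2 * (U \<omega>')^2) + b * ((mu*lam)^2 / (2*beta) * W \<omega>'))"
        using iU iU2 iW by simp
    qed (rule pt)
    also have "\<dots> = 1 + (mu*lam) * (\<integral>\<omega>'. U \<omega>' \<partial>M) + a * ((mu*lam)^2 / 2 * (\<integral>\<omega>'. (U \<omega>')^2 \<partial>M)) + b * ((mu*lam)^2 / (2*beta) * (\<integral>\<omega>'. W \<omega>' \<partial>M))"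
      using iU iU2 iW by (simp add: prob_space)
    also have "(\<integral>\<omega>'. U \<omega>' \<partial>M) = 0"
    proof -
      have "(\<integral>\<omega>'. U \<omega>' \<partial>M) = th \<bullet> (\<integral>\<omega>'. Y \<omega>' - Ybar \<partial>M)"
        unfolding U_def using iY by (intro integral_inner_right) simp
      also have "\<dots> = 0" using iY by (simp add: Ybar_def prob_space)
      finally show ?thesis .
    qed
    finally show ?thesis by (simp add: U_def W_def)
  qed
  have c01: "0 \<le> 1 - cX \<omega> \<and> 1 - cX \<omega> \<le> 1" for \<omega> using cf_bounds[OF lam, of "X \<omega>"] by (simp add: cX_def)
  have ic: "integrable M (\<lambda>\<omega>. 1 - cX \<omega>)"
    by (rule integrable_const_bound[where B=1]) (use c01 in auto)
  have inX: "integrable M (\<lambda>\<omega>. norm (X \<omega>))" using iX by simp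
  have iXm2: "integrable M (\<lambda>\<omega>. (norm (X \<omega> - m))^2)"
  proof (rule Bochner_Integration.integrable_bound)
    show "integrable M (\<lambda>\<omega>. 2 * (norm (X \<omega>))^2 + 2 * (norm m)^2)" using X_L2 by simp
    show "AE \<omega> in M. norm ((norm (X \<omega> - m))^2) \<le> norm (2 * (norm (X \<omega>))^2 + 2 * (norm m)^2)"
    proof (rule AE_I2)
      fix \<omega>
      have "(norm (X \<omega> - m))^2 \<le> (norm (X \<omega>) + norm m)^2"
        by (intro power_mono norm_triangle_ineq4) simp
      also have "\<dots> \<le> 2 * (norm (X \<omega>))^2 + 2 * (norm m)^2"
        using sum_squares_bound[of "norm (X \<omega>)" "norm m"]
        by (simp add: power2_eq_square algebra_simps)
      finally show "norm ((norm (X \<omega> - m))^2) \<le> norm (2 * (norm (X \<omega>))^2 + 2 * (norm m)^2)" by simp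
    qed
  qed measurable
  have YcX: "Y \<omega> = cX \<omega> *\<^sub>R X \<omega>" for \<omega> by (simp add: Y_def cX_def thresh_cf[OF lam])
  have VV: "(\<integral>\<omega>. (norm (Y \<omega> - Ybar))^2 \<partial>M) \<le> (\<integral>\<omega>. (norm (X \<omega> - m))^2 \<partial>M)"
  proof -
    have "(\<integral>\<omega>. (norm (Y \<omega> - Ybar))^2 \<partial>M) \<le> (\<integral>\<omega>. (norm (Y \<omega> - thresh lam m))^2 \<partial>M)"
      unfolding Ybar_def by (rule var_min[OF P Y_meas Yb])
    also have "\<dots> \<le> (\<integral>\<omega>. (norm (X \<omega> - m))^2 \<partial>M)"
    proof (rule integral_mono[OF _ iXm2])
      have b: "(norm (Y \<omega> - thresh lam m))^2 \<le> (2/lam)^2" for \<omega>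
        using order_trans[OF norm_triangle_ineq4, of "Y \<omega>" "thresh lam m"] Yb[of \<omega>] norm_thresh[OF lam, of m]
        by (intro power_mono) auto
      show "integrable M (\<lambda>\<omega>. (norm (Y \<omega> - thresh lam m))^2)"
        by (rule integrable_const_bound[where B="(2/lam)^2"]) (use b in auto)
      show "(norm (Y \<omega> - thresh lam m))^2 \<le> (norm (X \<omega> - m))^2" for \<omega>
        unfolding Y_def by (intro power_mono thresh_lipschitz[OF lam]) auto
    qed
    finally show ?thesis .
  qed
  have VT: "(\<integral>\<omega>. (th \<bullet> (Y \<omega> - Ybar))^2 \<partial>M) \<le> (\<integral>\<omega>. (th \<bullet> (X \<omega> - m))^2 \<partial>M) + (\<integral>\<omega>. 1 - cX \<omega> \<partial>M) * (th \<bullet> m)^2"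
    if th1: "norm th = 1" for th
  proof -
    have tYb: "norm (th \<bullet> Y \<omega>) \<le> 1/lam" for \<omega>
      using Cauchy_Schwarz_ineq2[of th "Y \<omega>"] th1 Yb[of \<omega>] by simp
    have tYm: "integral\<^sup>L M (\<lambda>\<omega>. th \<bullet> Y \<omega>) = th \<bullet> Ybar"
      unfolding Ybar_def using iY by (rule integral_inner_right)
    have iu2: "integrable M (\<lambda>\<omega>. (th \<bullet> (X \<omega> - m))^2)"
    proof (rule Bochner_Integration.integrable_bound[OF iXm2])
      show "AE \<omega> in M. norm ((th \<bullet> (X \<omega> - m))^2) \<le> norm ((norm (X \<omega> - m))^2)"
      proof (rule AE_I2)
        fix \<omega>
        have "\<bar>th \<bullet> (X \<omega> - m)\<bar> \<le> norm (X \<omega> - m)" using Cauchy_Schwarz_ineq2[of th "X \<omega> - m"] th1 by simp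
        hence "\<bar>th \<bullet> (X \<omega> - m)\<bar>^2 \<le> (norm (X \<omega> - m))^2" by (intro power_mono) auto
        thus "norm ((th \<bullet> (X \<omega> - m))^2) \<le> norm ((norm (X \<omega> - m))^2)" by simp
      qed
    qed measurable
    have "(\<integral>\<omega>. (th \<bullet> (Y \<omega> - Ybar))^2 \<partial>M) = (\<integral>\<omega>. (norm (th \<bullet> Y \<omega> - integral\<^sup>L M (\<lambda>\<omega>. th \<bullet> Y \<omega>)))^2 \<partial>M)"
      by (simp add: tYm inner_diff_right)
    also have "\<dots> \<le> (\<integral>\<omega>. (norm (th \<bullet> Y \<omega> - th \<bullet> m))^2 \<partial>M)"
      by (rule var_min[OF P _ tYb]) measurable
    also have "\<dots> \<le> (\<integral>\<omega>. (th \<bullet> (X \<omega> - m))^2 + (1 - cX \<omega>) * (th \<bullet> m)^2 \<partial>M)"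
    proof (rule integral_mono)
      have b: "(norm (th \<bullet> Y \<omega> - th \<bullet> m))^2 \<le> (1/lam + norm m)^2" for \<omega>
      proof -
        have "norm (th \<bullet> Y \<omega> - th \<bullet> m) \<le> norm (th \<bullet> Y \<omega>) + norm (th \<bullet> m)" by (rule norm_triangle_ineq4)
        also have "\<dots> \<le> 1/lam + norm m"
          using tYb[of \<omega>] Cauchy_Schwarz_ineq2[of th m] th1 by simp
        finally show ?thesis by (intro power_mono) auto
      qed
      show "integrable M (\<lambda>\<omega>. (norm (th \<bullet> Y \<omega> - th \<bullet> m))^2)"
        by (rule integrable_const_bound[where B="(1/lam + norm m)^2"]) (use b in auto)
      show "integrable M (\<lambda>\<omega>. (th \<bullet> (X \<omega> - m))^2 + (1 - cX \<omega>) * (th \<bullet> m)^2)"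
        using iu2 ic by simp
      fix \<omega>
      have "th \<bullet> Y \<omega> - th \<bullet> m = cX \<omega> * (th \<bullet> (X \<omega> - m)) - (1 - cX \<omega>) * (th \<bullet> m)"
        by (simp add: YcX inner_diff_right algebra_simps)
      hence "(norm (th \<bullet> Y \<omega> - th \<bullet> m))^2 = (cX \<omega> * (th \<bullet> (X \<omega> - m)) - (1 - cX \<omega>) * (th \<bullet> m))^2" by simp
      also have "\<dots> \<le> (th \<bullet> (X \<omega> - m))^2 + (1 - cX \<omega>) * (th \<bullet> m)^2"
        using c01[of \<omega>] by (intro sq_conv) auto
      finally show "(norm (th \<bullet> Y \<omega> - th \<bullet> m))^2 \<le> (th \<bullet> (X \<omega> - m))^2 + (1 - cX \<omega>) * (th \<bullet> m)^2" .
    qed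
    also have "\<dots> = (\<integral>\<omega>. (th \<bullet> (X \<omega> - m))^2 \<partial>M) + (\<integral>\<omega>. 1 - cX \<omega> \<partial>M) * (th \<bullet> m)^2"
      using iu2 ic by simp
    finally show ?thesis .
  qed
  have icnu: "integrable M (\<lambda>\<omega>. (1 - cX \<omega>) * neg_part (th \<bullet> (X \<omega> - m)))" if th1: "norm th = 1" for th
  proof (rule Bochner_Integration.integrable_bound)
    show "integrable M (\<lambda>\<omega>. norm (X \<omega>) + norm m)" using inX by simp
    show "AE \<omega> in M. norm ((1 - cX \<omega>) * neg_part (th \<bullet> (X \<omega> - m))) \<le> norm (norm (X \<omega>) + norm m)"
    proof (rule AE_I2)
      fix \<omega>
      have "\<bar>th \<bullet> (X \<omega> - m)\<bar> \<le> norm (X \<omega> - m)" using Cauchy_Schwarz_ineq2[of th "X \<omega> - m"] th1 by simp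
      also have "\<dots> \<le> norm (X \<omega>) + norm m" by (rule norm_triangle_ineq4)
      finally have h: "\<bar>th \<bullet> (X \<omega> - m)\<bar> \<le> norm (X \<omega>) + norm m" .
      have "\<bar>(1 - cX \<omega>) * neg_part (th \<bullet> (X \<omega> - m))\<bar> \<le> 1 * \<bar>th \<bullet> (X \<omega> - m)\<bar>"
        using c01[of \<omega>] unfolding abs_mult neg_part_def by (intro mult_mono) auto
      thus "norm ((1 - cX \<omega>) * neg_part (th \<bullet> (X \<omega> - m))) \<le> norm (norm (X \<omega>) + norm m)"
        using h by simp
    qed
  qed measurable
  have BI: "th \<bullet> Ybar - th \<bullet> m \<le> (\<integral>\<omega>. (1 - cX \<omega>) * neg_part (th \<bullet> (X \<omega> - m)) \<partial>M) + (\<integral>\<omega>. 1 - cX \<omega> \<partial>M) * neg_part (th \<bullet> m)"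
    if th1: "norm th = 1" for th
  proof -
    have "th \<bullet> Ybar - th \<bullet> m = (\<integral>\<omega>. th \<bullet> Y \<omega> - th \<bullet> X \<omega> \<partial>M)"
      using iY iX by (simp add: Ybar_def m_def)
    also have "\<dots> \<le> (\<integral>\<omega>. (1 - cX \<omega>) * neg_part (th \<bullet> (X \<omega> - m)) + (1 - cX \<omega>) * neg_part (th \<bullet> m) \<partial>M)"
    proof (rule integral_mono)
      show "integrable M (\<lambda>\<omega>. th \<bullet> Y \<omega> - th \<bullet> X \<omega>)" using iY iX by simp
      show "integrable M (\<lambda>\<omega>. (1 - cX \<omega>) * neg_part (th \<bullet> (X \<omega> - m)) + (1 - cX \<omega>) * neg_part (th \<bullet> m))"
        using icnu[OF th1] ic by simp
      fix \<omega>
      have e: "th \<bullet> Y \<omega> - th \<bullet> X \<omega> = - ((1 - cX \<omega>) * (th \<bullet> (X \<omega> - m))) - (1 - cX \<omega>) * (th \<bullet> m)"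
        by (simp add: YcX inner_diff_right algebra_simps)
      have "- ((1 - cX \<omega>) * (th \<bullet> (X \<omega> - m))) \<le> (1 - cX \<omega>) * neg_part (th \<bullet> (X \<omega> - m))"
        using c01[of \<omega>] unfolding neg_part_def
        by (metis max.cobounded2 mult_left_mono mult_minus_right)
      moreover have "- ((1 - cX \<omega>) * (th \<bullet> m)) \<le> (1 - cX \<omega>) * neg_part (th \<bullet> m)"
        using c01[of \<omega>] unfolding neg_part_def
        by (metis max.cobounded2 mult_left_mono mult_minus_right)
      ultimately show "th \<bullet> Y \<omega> - th \<bullet> X \<omega> \<le> (1 - cX \<omega>) * neg_part (th \<bullet> (X \<omega> - m)) + (1 - cX \<omega>) * neg_part (th \<bullet> m)"
        unfolding e by linarith
    qed
    also have "\<dots> = (\<integral>\<omega>. (1 - cX \<omega>) * neg_part (th \<bullet> (X \<omega> - m)) \<partial>M) + (\<integral>\<omega>. 1 - cX \<omega> \<partial>M) * neg_part (th \<bullet> m)"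
      using icnu[OF th1] ic by simp
    finally show ?thesis .
  qed
  have IB1: "ereal (\<integral>\<omega>. (1 - cX \<omega>) * neg_part (th \<bullet> (X \<omega> - m)) \<partial>M) \<le>
      (INF p\<in>{1::real..}. ereal (lam powr p / (p + 1) * (p / (p + 1)) powr p)
               * enn2ereal (\<integral>\<^sup>+ \<omega>'. ennreal (norm (X \<omega>') powr p
                                     * neg_part (th \<bullet> (X \<omega>' - m))) \<partial>M))"
    if th1: "norm th = 1" for th
  proof (rule INF_greatest)
    fix p :: real assume "p \<in> {1..}"
    hence p: "p > 0" by simp
    show "ereal (\<integral>\<omega>. (1 - cX \<omega>) * neg_part (th \<bullet> (X \<omega> - m)) \<partial>M) \<le>
      ereal (lam powr p / (p + 1) * (p / (p + 1)) powr p)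
               * enn2ereal (\<integral>\<^sup>+ \<omega>'. ennreal (norm (X \<omega>') powr p
                                     * neg_part (th \<bullet> (X \<omega>' - m))) \<partial>M)"
    proof (rule ereal_int_le_coef[OF icnu[OF th1]])
      fix \<omega>
      show "0 \<le> (1 - cX \<omega>) * neg_part (th \<bullet> (X \<omega> - m))"
        using c01[of \<omega>] by (simp add: neg_part_def)
      show "0 \<le> norm (X \<omega>) powr p * neg_part (th \<bullet> (X \<omega> - m))" by (simp add: neg_part_def)
      have "1 - cX \<omega> \<le> (lam powr p / (p + 1) * (p / (p + 1)) powr p) * norm (X \<omega>) powr p"
        unfolding cX_def by (rule coef_bound[OF lam p])
      hence "(1 - cX \<omega>) * neg_part (th \<bullet> (X \<omega> - m)) \<le> ((lam powr p / (p + 1) * (p / (p + 1)) powr p) * norm (X \<omega>) powr p) * neg_part (th \<bullet> (X \<omega> - m))"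
        by (rule mult_right_mono) (simp add: neg_part_def)
      thus "(1 - cX \<omega>) * neg_part (th \<bullet> (X \<omega> - m)) \<le> (lam powr p / (p + 1) * (p / (p + 1)) powr p) * (norm (X \<omega>) powr p * neg_part (th \<bullet> (X \<omega> - m)))"
        by (simp add: mult.assoc)
    qed (use p in auto)
  qed
  have IB2: "ereal ((\<integral>\<omega>. 1 - cX \<omega> \<partial>M) * q) \<le>
      (INF p\<in>{2::real..}. ereal (lam powr p / (p + 1) * (p / (p + 1)) powr p)
               * enn2ereal (\<integral>\<^sup>+ \<omega>'. ennreal (norm (X \<omega>') powr p) \<partial>M)
               * ereal q)"
    if q0: "q \<ge> 0" for q
  proof (rule INF_greatest)
    fix p :: real assume "p \<in> {2..}"
    hence p: "p > 0" by simp
    have "ereal (\<integral>\<omega>. 1 - cX \<omega> \<partial>M) \<le> ereal (lam powr p / (p + 1) * (p / (p + 1)) powr p)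
               * enn2ereal (\<integral>\<^sup>+ \<omega>'. ennreal (norm (X \<omega>') powr p) \<partial>M)"
    proof (rule ereal_int_le_coef[OF ic])
      fix \<omega>
      show "0 \<le> 1 - cX \<omega>" using c01[of \<omega>] by simp
      show "1 - cX \<omega> \<le> (lam powr p / (p + 1) * (p / (p + 1)) powr p) * norm (X \<omega>) powr p"
        unfolding cX_def by (rule coef_bound[OF lam p])
    qed (use p in auto)
    hence "ereal (\<integral>\<omega>. 1 - cX \<omega> \<partial>M) * ereal q \<le> ereal (lam powr p / (p + 1) * (p / (p + 1)) powr p)
               * enn2ereal (\<integral>\<^sup>+ \<omega>'. ennreal (norm (X \<omega>') powr p) \<partial>M) * ereal q"
      by (rule ereal_mult_right_mono) (use q0 in simp)
    thus "ereal ((\<integral>\<omega>. 1 - cX \<omega> \<partial>M) * q) \<le> ereal (lam powr p / (p + 1) * (p / (p + 1)) powr p)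
               * enn2ereal (\<integral>\<^sup>+ \<omega>'. ennreal (norm (X \<omega>') powr p) \<partial>M) * ereal q"
      by simp
  qed
  have n0: "real n > 0" using n_pos by simp
  have key: "ereal (th \<bullet> ((1 / real n) *\<^sub>R (\<Sum>i\<in>{1..n}. thresh lam (Xs i \<omega>)) - m)) \<le>
          ereal (a * mu * lam / 2 * integral\<^sup>L M (\<lambda>\<omega>'. (th \<bullet> (X \<omega>' - m))\<^sup>2)
                 + b * mu * lam / (2 * beta) * integral\<^sup>L M (\<lambda>\<omega>'. (norm (X \<omega>' - m))\<^sup>2)
                 + (beta + 2 * ln (1 / delta)) / (2 * mu * lam * real n))
          + (INF p\<in>{1::real..}. ereal (lam powr p / (p + 1) * (p / (p + 1)) powr p)
               * enn2ereal (\<integral>\<^sup>+ \<omega>'. ennreal (norm (X \<omega>') powr p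
                                     * neg_part (th \<bullet> (X \<omega>' - m))) \<partial>M))
          + (INF p\<in>{2::real..}. ereal (lam powr p / (p + 1) * (p / (p + 1)) powr p)
               * enn2ereal (\<integral>\<^sup>+ \<omega>'. ennreal (norm (X \<omega>') powr p) \<partial>M)
               * ereal (neg_part (th \<bullet> m) + a * mu * lam / 2 * (th \<bullet> m)\<^sup>2))"
    if \<omega>A: "\<omega> \<in> A" and th1: "norm th = 1" for \<omega> th
  proof -
    define mh where "mh = (1 / real n) *\<^sub>R (\<Sum>i\<in>{1..n}. thresh lam (Xs i \<omega>))"
    define Vth where "Vth = (\<integral>\<omega>. (th \<bullet> (Y \<omega> - Ybar))^2 \<partial>M)"
    define Vv where "Vv = (\<integral>\<omega>. (norm (Y \<omega> - Ybar))^2 \<partial>M)"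
    define Eu2 where "Eu2 = (\<integral>\<omega>. (th \<bullet> (X \<omega> - m))^2 \<partial>M)"
    define EX2 where "EX2 = (\<integral>\<omega>. (norm (X \<omega> - m))^2 \<partial>M)"
    define Ec where "Ec = (\<integral>\<omega>. 1 - cX \<omega> \<partial>M)"
    define Ecnu where "Ecnu = (\<integral>\<omega>. (1 - cX \<omega>) * neg_part (th \<bullet> (X \<omega> - m)) \<partial>M)"
    define L where "L = ln (1 / delta)"
    have sumf: "(\<Sum>i\<in>{1..n}. th \<bullet> f (Xs i \<omega>)) = mu * lam * (real n * (th \<bullet> mh) - real n * (th \<bullet> Ybar))"
    proof -
      have "(\<Sum>i\<in>{1..n}. th \<bullet> f (Xs i \<omega>)) = mu * lam * ((\<Sum>i\<in>{1..n}. th \<bullet> thresh lam (Xs i \<omega>)) - real n * (th \<bullet> Ybar))"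
        by (simp add: f_def inner_diff_right sum_subtractf sum_distrib_left algebra_simps)
      moreover have "real n * (th \<bullet> mh) = (\<Sum>i\<in>{1..n}. th \<bullet> thresh lam (Xs i \<omega>))"
        using n0 by (simp add: mh_def inner_sum_right)
      ultimately show ?thesis by simp
    qed
    have h2: "mu * lam * (real n * (th \<bullet> mh) - real n * (th \<bullet> Ybar)) \<le>
        real n * (a * (mu*lam)^2 / 2 * Vth + b * (mu*lam)^2 / (2*beta) * Vv) + beta/2 + L"
    proof -
      have "mu * lam * (real n * (th \<bullet> mh) - real n * (th \<bullet> Ybar)) \<le>
        real n * ((\<integral>\<omega>'. exp (th \<bullet> f (X \<omega>') + (norm (f (X \<omega>')))^2 / (2*beta)) \<partial>M) - 1) + beta/2 + L"
        using A_prop[OF \<omega>A th1] sumf by (simp add: L_def)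
      also have "\<dots> \<le> real n * (a * (mu*lam)^2 / 2 * Vth + b * (mu*lam)^2 / (2*beta) * Vv) + beta/2 + L"
        using EG[OF th1] n0 by (simp add: Vth_def Vv_def)
      finally show ?thesis .
    qed
    have D: "mu * lam * real n > 0" using mu lam n0 by simp
    have h3: "th \<bullet> mh - th \<bullet> Ybar \<le> a * mu * lam / 2 * Vth + b * mu * lam / (2 * beta) * Vv + (beta + 2 * L) / (2 * mu * lam * real n)"
    proof -
      have "(mu * lam * real n) * (th \<bullet> mh - th \<bullet> Ybar) \<le> (mu * lam * real n) * (a * mu * lam / 2 * Vth + b * mu * lam / (2 * beta) * Vv + (beta + 2 * L) / (2 * mu * lam * real n))"
      proof -
        have "(mu * lam * real n) * (a * mu * lam / 2 * Vth + b * mu * lam / (2 * beta) * Vv + (beta + 2 * L) / (2 * mu * lam * real n))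
            = real n * (a * (mu*lam)^2 / 2 * Vth + b * (mu*lam)^2 / (2*beta) * Vv) + beta/2 + L"
          using mu lam n0 bt by (simp add: field_simps power2_eq_square)
        thus ?thesis using h2 by (simp add: algebra_simps)
      qed
      thus ?thesis using D by (simp add: mult_le_cancel_left_pos)
    qed
    have VT': "Vth \<le> Eu2 + Ec * (th \<bullet> m)^2" using VT[OF th1] by (simp add: Vth_def Eu2_def Ec_def)
    have VV': "Vv \<le> EX2" using VV by (simp add: Vv_def EX2_def)
    have BI': "th \<bullet> Ybar - th \<bullet> m \<le> Ecnu + Ec * neg_part (th \<bullet> m)" using BI[OF th1] by (simp add: Ecnu_def Ec_def)
    have ca: "a * mu * lam / 2 \<ge> 0" using a1 mu lam by simp
    have cb: "b * mu * lam / (2 * beta) \<ge> 0" using b0 mu lam bt by simp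
    have "a * mu * lam / 2 * Vth \<le> a * mu * lam / 2 * (Eu2 + Ec * (th \<bullet> m)^2)" by (rule mult_left_mono[OF VT' ca])
    moreover have "b * mu * lam / (2 * beta) * Vv \<le> b * mu * lam / (2 * beta) * EX2" by (rule mult_left_mono[OF VV' cb])
    ultimately have real_ineq: "th \<bullet> (mh - m) \<le> (a * mu * lam / 2 * Eu2 + b * mu * lam / (2 * beta) * EX2 + (beta + 2 * L) / (2 * mu * lam * real n))
        + Ecnu + Ec * (neg_part (th \<bullet> m) + a * mu * lam / 2 * (th \<bullet> m)^2)"
      using h3 BI' by (simp add: inner_diff_right algebra_simps)
    have q0: "neg_part (th \<bullet> m) + a * mu * lam / 2 * (th \<bullet> m)^2 \<ge> 0"
      using ca by (simp add: neg_part_def)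
    have "ereal (th \<bullet> (mh - m)) \<le> ereal (a * mu * lam / 2 * Eu2 + b * mu * lam / (2 * beta) * EX2 + (beta + 2 * L) / (2 * mu * lam * real n))
        + ereal Ecnu + ereal (Ec * (neg_part (th \<bullet> m) + a * mu * lam / 2 * (th \<bullet> m)^2))"
      using real_ineq by simp
    also have "\<dots> \<le> ereal (a * mu * lam / 2 * Eu2 + b * mu * lam / (2 * beta) * EX2 + (beta + 2 * L) / (2 * mu * lam * real n))
          + (INF p\<in>{1::real..}. ereal (lam powr p / (p + 1) * (p / (p + 1)) powr p)
               * enn2ereal (\<integral>\<^sup>+ \<omega>'. ennreal (norm (X \<omega>') powr p
                                     * neg_part (th \<bullet> (X \<omega>' - m))) \<partial>M))
          + (INF p\<in>{2::real..}. ereal (lam powr p / (p + 1) * (p / (p + 1)) powr p)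
               * enn2ereal (\<integral>\<^sup>+ \<omega>'. ennreal (norm (X \<omega>') powr p) \<partial>M)
               * ereal (neg_part (th \<bullet> m) + a * mu * lam / 2 * (th \<bullet> m)\<^sup>2))"
      using IB1[OF th1] IB2[OF q0] unfolding Ecnu_def Ec_def by (intro add_mono order_refl)
    finally show ?thesis by (simp add: mh_def Eu2_def EX2_def L_def)
  qed
  show ?thesis
    using A_sets A_meas key unfolding Let_def m_def by blast
qed

end
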